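(* Let $A\in\mathbb Z^{d\times n}$ with $\ker(A)\cap\mathbb N^n=\{0\}$. Suppose that $A$ has a unique minimal Markov basis $M$ up to replacing its elements by their negatives. If $M$ is distance reducing, then $S(A)=D(A)=M(A)=\mathcal D(A)$.
   Context: For $z\in\mathbb Z^n$, $z^\pm\in\mathbb N^n$ are the unique vectors with disjoint supports and $z=z^+-z^-$; $\|\cdot\|$ is the $1$-norm; $\le$ is coordinatewise. A Markov basis is a set $B\subseteq\ker(A)$ whose binomials $x^{u^+}-x^{u^-}$ generate the toric ideal $I_A=\langle x^{u^+}-x^{u^-}:u\in\ker(A)\rangle$; minimal means no proper subset is one. $M(A)$ is the union of all minimal Markov bases. $S(A)$ is the set of nonzero $z\in\ker(A)$ with no decomposition $z=u+v$, $u,v\in\ker(A)\setminus\{0\}$, such that $u_i>0\Rightarrow v_i\ge0$ for all $i$. A positive (resp. negative) distance decomposition of $z$ is $z=u+v$ with $u,v\in\ker(A)\setminus\{0\}$, $u^+\le z^+$ (resp. $u^-\le z^-$), $\|v\|<\|z\|$; $D(A)$ is the set of nonzero $z\in\ker(A)$ admitting neither. For nonzero $z\in\ker(A)$, $u$ reduces the distance of $z$ if there exist $(p,q)\in\{(z^+,z^-),(z^-,z^+)\}$ and $\varepsilon\in\{\pm1\}$ with $p+\varepsilon u\in\mathbb N^n$ and $\|p+\varepsilon u-q\|<\|z\|$; $B$ is distance reducing if every nonzero $z\in\ker(A)$ has its distance reduced by some element of $B$. $\mathcal D(A)$ is the union of all minimal distance reducing Markov bases, i.e., distance reducing sets $B\subseteq\ker(A)$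 no proper subset of which is distance reducing. *)

theory Defs
  imports Complex_Main "HOL-Library.Poly_Mapping" "HOL-Library.Function_Algebras"
begin

(* Vectors in Z^n are functions 'n => int for a finite index type 'n;
   a d x n integer matrix is a function 'd => 'n => int. *)

definition kerA :: "('d::finite \<Rightarrow> 'n::finite \<Rightarrow> int) \<Rightarrow> ('n \<Rightarrow> int) set" where
  "kerA A = {z. \<forall>r. (\<Sum>j\<in>UNIV. A r j * z j) = 0}"

definition natvec :: "('n \<Rightarrow> int) \<Rightarrow> bool" where
  "natvec u \<longleftrightarrow> (\<forall>i. u i \<ge> 0)"

definition posp :: "('n \<Rightarrow> int) \<Rightarrow> ('n \<Rightarrow> int)" where
  "posp z = (\<lambda>i. max (z i) 0)"

definition negp :: "('n \<Rightarrow> int) \<Rightarrow> ('n \<Rightarrow> int)" where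
  "negp z = (\<lambda>i. max (- z i) 0)"

definition norm1 :: "('n::finite \<Rightarrow> int) \<Rightarrow> int" where
  "norm1 z = (\<Sum>i\<in>UNIV. \<bar>z i\<bar>)"

(* polynomial ring k[x_i : i in 'n] over k = rat, as finitely supported maps
   from exponent vectors to coefficients *)
type_synonym 'n poly_ring = "('n \<Rightarrow>\<^sub>0 nat) \<Rightarrow>\<^sub>0 rat"

definition monomial_of :: "('n::finite \<Rightarrow> int) \<Rightarrow> 'n poly_ring" where
  "monomial_of u = Poly_Mapping.single (Abs_poly_mapping (\<lambda>i. nat (u i))) 1"

definition binomial_of :: "('n::finite \<Rightarrow> int) \<Rightarrow> 'n poly_ring" where
  "binomial_of z = monomial_of (posp z) - monomial_of (negp z)"

definition gen_ideal :: "'a::comm_ring_1 set \<Rightarrow> 'a set" where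
  "gen_ideal G = {p. \<exists>S f. finite S \<and> S \<subseteq> G \<and> p = (\<Sum>g\<in>S. f g * g)}"

definition toric_ideal :: "('d::finite \<Rightarrow> 'n::finite \<Rightarrow> int) \<Rightarrow> 'n poly_ring set" where
  "toric_ideal A = gen_ideal (binomial_of ` kerA A)"

definition markov_basis :: "('d::finite \<Rightarrow> 'n::finite \<Rightarrow> int) \<Rightarrow> ('n \<Rightarrow> int) set \<Rightarrow> bool" where
  "markov_basis A B \<longleftrightarrow> B \<subseteq> kerA A \<and> gen_ideal (binomial_of ` B) = toric_ideal A"

definition minimal_markov_basis :: "('d::finite \<Rightarrow> 'n::finite \<Rightarrow> int) \<Rightarrow> ('n \<Rightarrow> int) set \<Rightarrow> bool" where
  "minimal_markov_basis A B \<longleftrightarrow> markov_basis A B \<and> (\<forall>B'. B' \<subset> B \<longrightarrow> \<not> markov_basis A B')"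

definition MA :: "('d::finite \<Rightarrow> 'n::finite \<Rightarrow> int) \<Rightarrow> ('n \<Rightarrow> int) set" where
  "MA A = \<Union>{B. minimal_markov_basis A B}"

definition SA :: "('d::finite \<Rightarrow> 'n::finite \<Rightarrow> int) \<Rightarrow> ('n \<Rightarrow> int) set" where
  "SA A = {z \<in> kerA A. z \<noteq> 0 \<and>
     \<not> (\<exists>u v. u \<in> kerA A - {0} \<and> v \<in> kerA A - {0} \<and> z = u + v \<and>
              (\<forall>i. u i > 0 \<longrightarrow> v i \<ge> 0))}"

definition pos_dist_decomp :: "('d::finite \<Rightarrow> 'n::finite \<Rightarrow> int) \<Rightarrow> ('n \<Rightarrow> int) \<Rightarrow> bool" where
  "pos_dist_decomp A z \<longleftrightarrow> (\<exists>u v. u \<in> kerA A - {0} \<and> v \<in> kerA A - {0} \<and> z = u + v \<and>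
       posp u \<le> posp z \<and> norm1 v < norm1 z)"

definition neg_dist_decomp :: "('d::finite \<Rightarrow> 'n::finite \<Rightarrow> int) \<Rightarrow> ('n \<Rightarrow> int) \<Rightarrow> bool" where
  "neg_dist_decomp A z \<longleftrightarrow> (\<exists>u v. u \<in> kerA A - {0} \<and> v \<in> kerA A - {0} \<and> z = u + v \<and>
       negp u \<le> negp z \<and> norm1 v < norm1 z)"

definition DA :: "('d::finite \<Rightarrow> 'n::finite \<Rightarrow> int) \<Rightarrow> ('n \<Rightarrow> int) set" where
  "DA A = {z \<in> kerA A. z \<noteq> 0 \<and> \<not> pos_dist_decomp A z \<and> \<not> neg_dist_decomp A z}"

definition reduces_distance :: "('n::finite \<Rightarrow> int) \<Rightarrow> ('n \<Rightarrow> int) \<Rightarrow> bool" where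
  "reduces_distance u z \<longleftrightarrow>
     (\<exists>p q e. (p, q) \<in> {(posp z, negp z), (negp z, posp z)} \<and> e \<in> {1, -1::int} \<and>
        natvec (\<lambda>i. p i + e * u i) \<and> norm1 (\<lambda>i. p i + e * u i - q i) < norm1 z)"

definition distance_reducing :: "('d::finite \<Rightarrow> 'n::finite \<Rightarrow> int) \<Rightarrow> ('n \<Rightarrow> int) set \<Rightarrow> bool" where
  "distance_reducing A B \<longleftrightarrow> B \<subseteq> kerA A \<and>
     (\<forall>z \<in> kerA A. z \<noteq> 0 \<longrightarrow> (\<exists>u \<in> B. reduces_distance u z))"

definition minimal_distance_reducing :: "('d::finite \<Rightarrow> 'n::finite \<Rightarrow> int) \<Rightarrow> ('n \<Rightarrow> int) set \<Rightarrow> bool" where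
  "minimal_distance_reducing A B \<longleftrightarrow> distance_reducing A B \<and>
     (\<forall>B'. B' \<subset> B \<longrightarrow> \<not> distance_reducing A B')"

definition calDA :: "('d::finite \<Rightarrow> 'n::finite \<Rightarrow> int) \<Rightarrow> ('n \<Rightarrow> int) set" where
  "calDA A = \<Union>{B. minimal_distance_reducing A B}"

end

theory Submission
  imports Defs
begin


lemma kerA_diff: "u \<in> kerA A \<Longrightarrow> v \<in> kerA A \<Longrightarrow> u - v \<in> kerA A"
  by (simp add: kerA_def right_diff_distrib sum_subtractf)
lemma kerA_add: "u \<in> kerA A \<Longrightarrow> v \<in> kerA A \<Longrightarrow> u + v \<in> kerA A"
  by (simp add: kerA_def distrib_left sum.distrib)
lemma kerA_uminus: "u \<in> kerA A \<Longrightarrow> - u \<in> kerA A"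
  by (simp add: kerA_def sum_negf)
lemma kerA_zero: "0 \<in> kerA A"
  by (simp add: kerA_def)

lemma posp_negp: "posp z - negp z = z"
  by (auto simp: posp_def negp_def fun_eq_iff)
lemma natvec_posp: "natvec (posp z)" by (simp add: natvec_def posp_def)
lemma natvec_negp: "natvec (negp z)" by (simp add: natvec_def negp_def)

definition ex :: "('n::finite \<Rightarrow> int) \<Rightarrow> ('n \<Rightarrow>\<^sub>0 nat)" where
  "ex v = Abs_poly_mapping (\<lambda>i. nat (v i))"

lemma lookup_ex[simp]: "Poly_Mapping.lookup (ex v) = (\<lambda>i. nat (v i))"
  unfolding ex_def by (subst lookup_Abs_poly_mapping) auto

lemma monomial_of_ex: "monomial_of v = Poly_Mapping.single (ex v) 1"
  by (simp add: monomial_of_def ex_def)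

lemma ex_add: "natvec x \<Longrightarrow> natvec y \<Longrightarrow> ex (x + y) = ex x + ex y"
  by (rule poly_mapping_eqI) (simp add: lookup_add natvec_def nat_add_distrib)

lemma monomial_of_add: "natvec x \<Longrightarrow> natvec y \<Longrightarrow> monomial_of (x + y) = monomial_of x * monomial_of y"
  by (simp add: monomial_of_ex ex_add mult_single)

definition vec :: "('n::finite \<Rightarrow>\<^sub>0 nat) \<Rightarrow> ('n \<Rightarrow> int)" where
  "vec a = (\<lambda>i. int (Poly_Mapping.lookup a i))"

lemma ex_vec[simp]: "ex (vec a) = a"
  by (rule poly_mapping_eqI) (simp add: vec_def)
lemma vec_ex: "natvec v \<Longrightarrow> vec (ex v) = v"
  by (auto simp: vec_def natvec_def fun_eq_iff)
lemma natvec_vec[simp]: "natvec (vec a)" by (simp add: natvec_def vec_def)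
lemma vec_add: "vec (a + b) = vec a + vec b"
  by (simp add: vec_def lookup_add fun_eq_iff)

lemma GI_gen: "g \<in> G \<Longrightarrow> g \<in> gen_ideal G"
  unfolding gen_ideal_def by (rule CollectI, rule exI[of _ "{g}"], rule exI[of _ "\<lambda>_. 1"]) simp

lemma GI_0: "0 \<in> gen_ideal G"
  unfolding gen_ideal_def by (rule CollectI, rule exI[of _ "{}"]) simp

lemma GI_add: assumes "p \<in> gen_ideal G" "q \<in> gen_ideal G" shows "p + q \<in> gen_ideal G"
proof -
  obtain S1 f1 where 1: "finite S1" "S1 \<subseteq> G" "p = (\<Sum>g\<in>S1. f1 g * g)" using assms(1) unfolding gen_ideal_def by blast
  obtain S2 f2 where 2: "finite S2" "S2 \<subseteq> G" "q = (\<Sum>g\<in>S2. f2 g * g)" using assms(2) unfolding gen_ideal_def by blast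
  define f where "f g = (if g \<in> S1 then f1 g else 0) + (if g \<in> S2 then f2 g else 0)" for g
  have "(\<Sum>g\<in>S1 \<union> S2. f g * g) = (\<Sum>g\<in>S1 \<union> S2. (if g \<in> S1 then f1 g * g else 0)) + (\<Sum>g\<in>S1 \<union> S2. (if g \<in> S2 then f2 g * g else 0))"
  proof -
    have "\<And>g. f g * g = (if g \<in> S1 then f1 g * g else 0) + (if g \<in> S2 then f2 g * g else 0)"
      by (simp add: f_def distrib_right)
    then show ?thesis by (simp add: sum.distrib)
  qed
  also have "\<dots> = p + q"
  proof -
    have a: "(\<Sum>g\<in>S1 \<union> S2. (if g \<in> S1 then f1 g * g else 0)) = (\<Sum>g\<in>S1. f1 g * g)"
    proof -
      have "(S1 \<union> S2) \<inter> S1 = S1" by blast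
      moreover have "finite (S1 \<union> S2)" using 1 2 by blast
      ultimately show ?thesis using sum.inter_restrict[of "S1 \<union> S2" "\<lambda>g. f1 g * g" S1] by metis
    qed
    have b: "(\<Sum>g\<in>S1 \<union> S2. (if g \<in> S2 then f2 g * g else 0)) = (\<Sum>g\<in>S2. f2 g * g)"
    proof -
      have "(S1 \<union> S2) \<inter> S2 = S2" by blast
      moreover have "finite (S1 \<union> S2)" using 1 2 by blast
      ultimately show ?thesis using sum.inter_restrict[of "S1 \<union> S2" "\<lambda>g. f2 g * g" S2] by metis
    qed
    show ?thesis using a b 1(3) 2(3) by simp
  qed
  finally have "p + q = (\<Sum>g\<in>S1 \<union> S2. f g * g)" by simp
  then show ?thesis unfolding gen_ideal_def using 1 2
    by (intro CollectI exI[of _ "S1 \<union> S2"] exI[of _ f]) auto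
qed

lemma GI_mult: assumes "p \<in> gen_ideal G" shows "r * p \<in> gen_ideal G"
proof -
  obtain S f where 1: "finite S" "S \<subseteq> G" "p = (\<Sum>g\<in>S. f g * g)" using assms unfolding gen_ideal_def by blast
  have "r * p = (\<Sum>g\<in>S. (r * f g) * g)" using 1 by (simp add: sum_distrib_left mult.assoc)
  then show ?thesis unfolding gen_ideal_def using 1
    by (intro CollectI exI[of _ S] exI[of _ "\<lambda>g. r * f g"]) auto
qed

lemma GI_uminus: "p \<in> gen_ideal G \<Longrightarrow> - p \<in> gen_ideal G"
  using GI_mult[of p G "-1"] by simp

lemma GI_diff: "p \<in> gen_ideal G \<Longrightarrow> q \<in> gen_ideal G \<Longrightarrow> p - q \<in> gen_ideal G"
  by (metis GI_add GI_uminus diff_conv_add_uminus)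

lemma GI_sum: "finite S \<Longrightarrow> (\<And>s. s \<in> S \<Longrightarrow> h s \<in> gen_ideal G) \<Longrightarrow> sum h S \<in> gen_ideal G"
  by (induction S rule: finite_induct) (auto intro: GI_0 GI_add)

lemma GI_subset: assumes "G \<subseteq> gen_ideal H" shows "gen_ideal G \<subseteq> gen_ideal H"
proof
  fix p assume "p \<in> gen_ideal G"
  then obtain S f where 1: "finite S" "S \<subseteq> G" "p = (\<Sum>g\<in>S. f g * g)" unfolding gen_ideal_def by blast
  show "p \<in> gen_ideal H" unfolding 1(3) using 1 assms by (intro GI_sum GI_mult) auto
qed


definition step :: "('n::finite \<Rightarrow> int) set \<Rightarrow> ('n \<Rightarrow> int) \<Rightarrow> ('n \<Rightarrow> int) \<Rightarrow> bool" where
  "step B x y \<longleftrightarrow> natvec x \<and> natvec y \<and> (x - y \<in> B \<or> y - x \<in> B)"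

abbreviation conn where "conn B \<equiv> (step B)\<^sup>*\<^sup>*"

definition fib_conn :: "('d::finite \<Rightarrow> 'n::finite \<Rightarrow> int) \<Rightarrow> ('n \<Rightarrow> int) set \<Rightarrow> bool" where
  "fib_conn A B \<longleftrightarrow> (\<forall>x y. natvec x \<and> natvec y \<and> x - y \<in> kerA A \<longrightarrow> conn B x y)"

lemma step_sym: "step B x y \<Longrightarrow> step B y x"
  unfolding step_def by auto

lemma conn_sym: "conn B x y \<Longrightarrow> conn B y x"
  by (induction rule: rtranclp_induct) (auto intro: converse_rtranclp_into_rtranclp step_sym)

lemma conn_translate: assumes "conn B x y" "natvec g" shows "conn B (g + x) (g + y)"
  using assms(1)
proof (induction rule: rtranclp_induct)
  case base then show ?case by simp
next
  case (step y z)
  have "step B (g + y) (g + z)" using step(2) assms(2) unfolding step_def natvec_def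
    by (auto simp: add_nonneg_nonneg)
  then show ?case using step(3) by (meson rtranclp.rtrancl_into_rtrancl)
qed

lemma min_posp: "(\<lambda>i. min (p i) (q i)) + posp (p - q) = p"
  by (auto simp: posp_def fun_eq_iff)
lemma min_negp: "(\<lambda>i. min (p i) (q i)) + negp (p - q) = q"
  by (auto simp: negp_def fun_eq_iff)
lemma natvec_min: "natvec p \<Longrightarrow> natvec q \<Longrightarrow> natvec (\<lambda>i. min (p i) (q i))"
  by (simp add: natvec_def)

lemma mono_diff_bin:
  assumes "natvec p" "natvec q"
  shows "monomial_of p - monomial_of q = monomial_of (\<lambda>i. min (p i) (q i)) * binomial_of (p - q)"
proof -
  let ?g = "\<lambda>i. min (p i) (q i)"
  have "monomial_of p = monomial_of ?g * monomial_of (posp (p - q))"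
    using monomial_of_add[OF natvec_min[OF assms] natvec_posp] min_posp by metis
  moreover have "monomial_of q = monomial_of ?g * monomial_of (negp (p - q))"
    using monomial_of_add[OF natvec_min[OF assms] natvec_negp] min_negp by metis
  ultimately show ?thesis by (simp add: binomial_of_def right_diff_distrib)
qed

lemma step_bin: assumes "step B p q" shows "monomial_of p - monomial_of q \<in> gen_ideal (binomial_of ` B)"
proof -
  have np: "natvec p" "natvec q" using assms unfolding step_def by auto
  consider "p - q \<in> B" | "q - p \<in> B" using assms unfolding step_def by auto
  then show ?thesis
  proof cases
    case 1
    then show ?thesis unfolding mono_diff_bin[OF np] by (intro GI_mult GI_gen) auto
  next
    case 2
    then have "monomial_of q - monomial_of p \<in> gen_ideal (binomial_of ` B)"
      unfolding mono_diff_bin[OF np(2,1)] by (intro GI_mult GI_gen) auto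
    from GI_uminus[OF this] show ?thesis by simp
  qed
qed

lemma conn_bin: assumes "conn B x y" shows "monomial_of x - monomial_of y \<in> gen_ideal (binomial_of ` B)"
  using assms
proof (induction rule: rtranclp_induct)
  case base then show ?case by (simp add: GI_0)
next
  case (step y z)
  from GI_add[OF step(3) step_bin[OF step(2)]] show ?case by simp
qed

lemma fib_conn_markov: assumes "B \<subseteq> kerA A" "fib_conn A B" shows "markov_basis A B"
proof -
  have "binomial_of w \<in> gen_ideal (binomial_of ` B)" if "w \<in> kerA A" for w
  proof -
    have "conn B (posp w) (negp w)" using assms(2) that natvec_posp natvec_negp posp_negp
      unfolding fib_conn_def by metis
    from conn_bin[OF this] show ?thesis by (simp add: binomial_of_def)
  qed
  then have "toric_ideal A \<subseteq> gen_ideal (binomial_of ` B)"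
    unfolding toric_ideal_def by (intro GI_subset) auto
  moreover have "gen_ideal (binomial_of ` B) \<subseteq> toric_ideal A"
    unfolding toric_ideal_def using assms(1) by (intro GI_subset) (auto intro!: GI_gen)
  ultimately show ?thesis unfolding markov_basis_def using assms(1) by blast
qed



definition phi :: "('n \<Rightarrow>\<^sub>0 nat) set \<Rightarrow> 'n poly_ring \<Rightarrow> rat" where
  "phi C p = (\<Sum>a\<in>Poly_Mapping.keys p. if a \<in> C then Poly_Mapping.lookup p a else 0)"

lemma phi_sup: assumes "finite S" "Poly_Mapping.keys p \<subseteq> S"
  shows "phi C p = (\<Sum>a\<in>S. if a \<in> C then Poly_Mapping.lookup p a else 0)"
  unfolding phi_def using assms by (intro sum.mono_neutral_left) (auto simp: in_keys_iff)

lemma phi_add: "phi C (p + q) = phi C p + phi C q"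
proof -
  let ?S = "Poly_Mapping.keys p \<union> Poly_Mapping.keys q"
  have f: "finite ?S" by simp
  have "phi C (p + q) = (\<Sum>a\<in>?S. if a \<in> C then Poly_Mapping.lookup (p + q) a else 0)"
    by (rule phi_sup[OF f]) (rule keys_add)
  also have "\<dots> = (\<Sum>a\<in>?S. if a \<in> C then Poly_Mapping.lookup p a else 0) + (\<Sum>a\<in>?S. if a \<in> C then Poly_Mapping.lookup q a else 0)"
    unfolding sum.distrib[symmetric] by (intro sum.cong refl) (simp add: lookup_add)
  also have "\<dots> = phi C p + phi C q"
    by (subst (1 2) phi_sup[OF f]) auto
  finally show ?thesis .
qed

lemma phi_uminus: "phi C (- p) = - phi C p"
proof -
  have k: "Poly_Mapping.keys (- p) = Poly_Mapping.keys p" by (auto simp: in_keys_iff)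
  show ?thesis unfolding phi_def k sum_negf[symmetric] by (intro sum.cong refl) simp
qed

lemma phi_diff: "phi C (p - q) = phi C p - phi C q"
  using phi_add[of C p "- q"] phi_uminus[of C q] by simp

lemma phi_zero: "phi C 0 = 0"
  unfolding phi_def by simp

lemma phi_sum: "finite S \<Longrightarrow> phi C (sum h S) = (\<Sum>s\<in>S. phi C (h s))"
  by (induction S rule: finite_induct) (auto simp: phi_zero phi_add)

lemma phi_single: "phi C (Poly_Mapping.single a c) = (if a \<in> C then c else 0)"
  by (subst phi_sup[of "{a}"]) auto

lemma pm_expansion: "p = (\<Sum>a\<in>Poly_Mapping.keys p. Poly_Mapping.single a (Poly_Mapping.lookup p a))"
proof (rule poly_mapping_eqI)
  fix k
  show "Poly_Mapping.lookup p k = Poly_Mapping.lookup (\<Sum>a\<in>Poly_Mapping.keys p. Poly_Mapping.single a (Poly_Mapping.lookup p a)) k"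
    by (simp add: lookup_sum lookup_single when_def in_keys_iff)
qed

lemma mult_single_exp: "(p :: 'n poly_ring) * Poly_Mapping.single b 1 = (\<Sum>a\<in>Poly_Mapping.keys p. Poly_Mapping.single (a + b) (Poly_Mapping.lookup p a))"
proof -
  have "p * Poly_Mapping.single b 1 = (\<Sum>a\<in>Poly_Mapping.keys p. Poly_Mapping.single a (Poly_Mapping.lookup p a)) * Poly_Mapping.single b 1"
    by (subst pm_expansion[of p]) (rule refl)
  also have "\<dots> = (\<Sum>a\<in>Poly_Mapping.keys p. Poly_Mapping.single (a + b) (Poly_Mapping.lookup p a))"
    by (simp add: sum_distrib_right mult_single)
  finally show ?thesis .
qed

lemma phi_mult_single: "phi C ((p :: 'n poly_ring) * Poly_Mapping.single b 1) = (\<Sum>a\<in>Poly_Mapping.keys p. if a + b \<in> C then Poly_Mapping.lookup p a else 0)"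
  by (simp add: mult_single_exp phi_sum phi_single)

lemma phi_mult_bin: assumes "\<And>a. a + b \<in> C \<longleftrightarrow> a + c \<in> C"
  shows "phi C ((p :: 'n poly_ring) * (Poly_Mapping.single b 1 - Poly_Mapping.single c 1)) = 0"
  by (simp add: right_diff_distrib phi_diff phi_mult_single assms)

lemma markov_conn_pm: assumes "markov_basis A B" "w \<in> kerA A"
  shows "conn B (posp w) (negp w)"
proof -
  have Bk: "B \<subseteq> kerA A" and eq: "gen_ideal (binomial_of ` B) = toric_ideal A"
    using assms(1) unfolding markov_basis_def by auto
  have "binomial_of w \<in> toric_ideal A" unfolding toric_ideal_def using assms(2) by (intro GI_gen) auto
  then obtain S f where S: "finite S" "S \<subseteq> binomial_of ` B" "binomial_of w = (\<Sum>g\<in>S. f g * g)"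
    unfolding eq[symmetric] gen_ideal_def by blast
  define C where "C = {a. conn B (posp w) (vec a)}"
  have "phi C (f g * g) = 0" if gS: "g \<in> S" for g
  proof -
    obtain b where b: "b \<in> B" "g = binomial_of b" using S(2) gS by auto
    have "a + ex (posp b) \<in> C \<longleftrightarrow> a + ex (negp b) \<in> C" for a
    proof -
      have "vec (a + ex (posp b)) - vec (a + ex (negp b)) = b"
        unfolding vec_add vec_ex[OF natvec_posp] vec_ex[OF natvec_negp]
        using posp_negp[of b] by (simp add: algebra_simps)
      then have st: "step B (vec (a + ex (posp b))) (vec (a + ex (negp b)))"
        unfolding step_def using b(1) by simp
      show ?thesis unfolding C_def using st step_sym[OF st]
        by (auto intro: rtranclp.rtrancl_into_rtrancl)
    qed
    then show ?thesis unfolding b(2) binomial_of_def monomial_of_ex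
      by (intro phi_mult_bin) auto
  qed
  then have "phi C (binomial_of w) = 0" unfolding S(3) by (simp add: phi_sum S(1))
  moreover have "ex (posp w) \<in> C" unfolding C_def using vec_ex[OF natvec_posp[of w]] by simp
  ultimately have "ex (negp w) \<in> C"
    unfolding binomial_of_def monomial_of_ex phi_diff phi_single by (auto split: if_splits)
  then show ?thesis unfolding C_def using vec_ex[OF natvec_negp[of w]] by simp
qed

lemma markov_fib_conn: assumes "markov_basis A B" shows "fib_conn A B"
  unfolding fib_conn_def
proof (intro allI impI)
  fix x y assume h: "natvec x \<and> natvec y \<and> x - y \<in> kerA A"
  have "conn B (posp (x - y)) (negp (x - y))" using markov_conn_pm[OF assms] h by blast
  from conn_translate[OF this natvec_min[of x y]] h show "conn B x y"
    unfolding min_posp min_negp by blast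
qed

lemma markov_iff: "markov_basis A B \<longleftrightarrow> B \<subseteq> kerA A \<and> fib_conn A B"
  using markov_fib_conn fib_conn_markov markov_basis_def by blast



lemma monoseq_sub: assumes "monoseq g" "strict_mono h" shows "monoseq (\<lambda>n. g (h n))"
  using assms unfolding monoseq_def by (metis strict_mono_less_eq)

lemma decr_nat_const: fixes g :: "nat \<Rightarrow> nat"
  assumes "\<forall>m. \<forall>n\<ge>m. g n \<le> g m" shows "\<exists>N. \<forall>n\<ge>N. g n = g N"
proof -
  obtain N where N: "\<forall>n. g N \<le> g n"
    using ex_has_least_nat[of "\<lambda>_. True" 0 g] by auto
  then show ?thesis using assms by (metis le_antisym)
qed

lemma dickson: fixes f :: "nat \<Rightarrow> 'n::finite \<Rightarrow> nat" shows "\<exists>i j. i < j \<and> f i \<le> f j"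
proof -
  have aux: "finite K \<Longrightarrow> \<exists>h. strict_mono h \<and> (\<forall>k\<in>K. monoseq (\<lambda>j. f (h j) k))" for K
  proof (induction K rule: finite_induct)
    case empty
    show ?case by (rule exI[of _ id]) (simp add: strict_mono_def)
  next
    case (insert k K)
    then obtain h where h: "strict_mono h" "\<forall>k\<in>K. monoseq (\<lambda>j. f (h j) k)" by blast
    obtain h' where h': "strict_mono h'" "monoseq (\<lambda>n. f (h (h' n)) k)"
      using seq_monosub[of "\<lambda>j. f (h j) k"] by blast
    have sm: "strict_mono (\<lambda>j. h (h' j))" using h(1) h'(1) by (simp add: strict_mono_def)
    have "monoseq (\<lambda>j. f (h (h' j)) k')" if "k' \<in> insert k K" for k'
    proof (cases "k' = k")
      case True then show ?thesis using h'(2) by simp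
    next
      case False
      then have "monoseq (\<lambda>j. f (h j) k')" using h(2) that by blast
      from monoseq_sub[OF this h'(1)] show ?thesis .
    qed
    then show ?case using sm by (intro exI[of _ "\<lambda>j. h (h' j)"]) blast
  qed
  obtain h where h: "strict_mono h" "\<forall>k. monoseq (\<lambda>j. f (h j) k)" using aux[of UNIV] by auto
  have ex: "\<forall>k. \<exists>N. (\<forall>m. \<forall>n\<ge>m. f (h m) k \<le> f (h n) k) \<or> (\<forall>n\<ge>N. f (h n) k = f (h N) k)"
  proof
    fix k
    have "monoseq (\<lambda>j. f (h j) k)" using h(2) by blast
    then have "(\<forall>m. \<forall>n\<ge>m. f (h m) k \<le> f (h n) k) \<or> (\<forall>m. \<forall>n\<ge>m. f (h n) k \<le> f (h m) k)"
      unfolding monoseq_def .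
    then show "\<exists>N. (\<forall>m. \<forall>n\<ge>m. f (h m) k \<le> f (h n) k) \<or> (\<forall>n\<ge>N. f (h n) k = f (h N) k)"
    proof
      assume "\<forall>m. \<forall>n\<ge>m. f (h n) k \<le> f (h m) k"
      from decr_nat_const[of "\<lambda>j. f (h j) k", OF this] show ?thesis by blast
    qed blast
  qed
  obtain Nf where Nf0: "\<forall>k. (\<forall>m. \<forall>n\<ge>m. f (h m) k \<le> f (h n) k) \<or> (\<forall>n\<ge>Nf k. f (h n) k = f (h (Nf k)) k)"
    using choice[OF ex] by blast
  have Nf: "(\<forall>m. \<forall>n\<ge>m. f (h m) k \<le> f (h n) k) \<or> (\<forall>n\<ge>Nf k. f (h n) k = f (h (Nf k)) k)" for k
    using Nf0 by blast
  define N where "N = Max (range Nf)"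
  have NN: "Nf k \<le> N" for k unfolding N_def by (rule Max_ge) auto
  have "f (h N) k \<le> f (h (Suc N)) k" for k
  proof -
    from Nf[of k] show ?thesis
    proof
      assume "\<forall>n\<ge>Nf k. f (h n) k = f (h (Nf k)) k"
      then have e1: "f (h N) k = f (h (Nf k)) k" and e2: "f (h (Suc N)) k = f (h (Nf k)) k"
        using NN[of k] le_SucI[OF NN[of k]] by blast+
      show ?thesis unfolding e1 e2 by (rule order.refl)
    qed auto
  qed
  then have "f (h N) \<le> f (h (Suc N))" by (simp add: le_fun_def)
  moreover have "h N < h (Suc N)" using h(1) by (simp add: strict_mono_def)
  ultimately show ?thesis by blast
qed


definition fiber :: "('d::finite \<Rightarrow> 'n::finite \<Rightarrow> int) \<Rightarrow> ('n \<Rightarrow> int) \<Rightarrow> ('n \<Rightarrow> int) set" where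
  "fiber A x = {p. natvec p \<and> p - x \<in> kerA A}"

lemma fiber_finite: assumes pointed: "kerA A \<inter> {u. natvec u} = {0}"
  shows "finite (fiber A x)"
proof (rule ccontr)
  assume "infinite (fiber A x)"
  then obtain f :: "nat \<Rightarrow> _" where f: "inj f" "range f \<subseteq> fiber A x"
    using infinite_countable_subset by blast
  obtain i j where ij: "i < j" "(\<lambda>k. nat (f i k)) \<le> (\<lambda>k. nat (f j k))"
    using dickson[of "\<lambda>i k. nat (f i k)"] by blast
  have fi: "natvec (f i)" "f i - x \<in> kerA A" and fj: "natvec (f j)" "f j - x \<in> kerA A"
    using f(2) unfolding fiber_def by auto
  have "natvec (f j - f i)" using ij(2) fi(1) fj(1) unfolding natvec_def le_fun_def
    by (metis diff_ge_0_iff_ge eq_nat_nat_iff minus_apply nat_le_eq_zle)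
  moreover have "f j - f i \<in> kerA A" using kerA_diff[OF fj(2) fi(2)] by simp
  ultimately have "f j - f i = 0" using pointed by blast
  then have "f j = f i" by simp
  then show False using f(1) ij(1) by (metis inj_eq less_irrefl)
qed




lemma conn_transfer:
  assumes "conn B x y" "B \<subseteq> kerA A" "natvec x"
    and sub: "\<And>p q. p \<in> fiber A x \<Longrightarrow> q \<in> fiber A x \<Longrightarrow> p - q \<in> B \<Longrightarrow> p - q \<in> B'"
  shows "conn B' x y \<and> y \<in> fiber A x"
  using assms(1)
proof (induction rule: rtranclp_induct)
  case base
  then show ?case using assms(3) kerA_zero unfolding fiber_def by simp
next
  case (step y z)
  have y: "y \<in> fiber A x" and cy: "conn B' x y" using step(3) by auto
  have st: "natvec y" "natvec z" "y - z \<in> B \<or> z - y \<in> B" using step(2) unfolding step_def by auto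
  then have "y - z \<in> kerA A"
  proof (cases "y - z \<in> B")
    case True then show ?thesis using assms(2) by blast
  next
    case False
    then have "z - y \<in> kerA A" using st(3) assms(2) by blast
    from kerA_uminus[OF this] show ?thesis by simp
  qed
  then have "z - x \<in> kerA A" using kerA_diff[of "y - x" A "y - z"] y unfolding fiber_def by simp
  then have z: "z \<in> fiber A x" using st unfolding fiber_def by simp
  have "step B' y z" using st sub[OF y z] sub[OF z y] unfolding step_def by auto
  then show ?case using cy z by (meson rtranclp.rtrancl_into_rtrancl)
qed

lemma chain_inter_markov:
  assumes pointed: "kerA A \<inter> {u. natvec u} = {0}"
    and ne: "\<C> \<noteq> {}" and mk: "\<And>X. X \<in> \<C> \<Longrightarrow> markov_basis A X"
    and ch: "\<And>X Y. X \<in> \<C> \<Longrightarrow> Y \<in> \<C> \<Longrightarrow> X \<subseteq> Y \<or> Y \<subseteq> X"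
  shows "markov_basis A (\<Inter>\<C>)"
proof -
  obtain X1 where X1: "X1 \<in> \<C>" using ne by blast
  have sub: "\<Inter>\<C> \<subseteq> kerA A" using mk[OF X1] X1 unfolding markov_basis_def by blast
  have "fib_conn A (\<Inter>\<C>)" unfolding fib_conn_def
  proof (intro allI impI)
    fix x y assume h: "natvec x \<and> natvec y \<and> x - y \<in> kerA A"
    define R where "R = (\<lambda>(p, q). p - q) ` (fiber A x \<times> fiber A x)"
    have fR: "finite R" unfolding R_def using fiber_finite[OF pointed] by simp
    obtain X0 where X0: "X0 \<in> \<C>" "\<forall>Y. Y \<in> \<C> \<longrightarrow> card (X0 \<inter> R) \<le> card (Y \<inter> R)"
      using ex_has_least_nat[of "\<lambda>X. X \<in> \<C>" X1 "\<lambda>X. card (X \<inter> R)"] X1 by blast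
    have X0R: "X0 \<inter> R \<subseteq> Y" if "Y \<in> \<C>" for Y
    proof (cases "X0 \<subseteq> Y")
      case True then show ?thesis by blast
    next
      case False
      then have "Y \<subseteq> X0" using ch[OF X0(1) that] by blast
      then have "Y \<inter> R \<subseteq> X0 \<inter> R" by blast
      moreover have "card (X0 \<inter> R) \<le> card (Y \<inter> R)" using X0(2) that by blast
      ultimately have "Y \<inter> R = X0 \<inter> R" using fR by (meson card_seteq finite_Int)
      then show ?thesis by blast
    qed
    have mk0: "markov_basis A X0" using mk[OF X0(1)] .
    have c0: "conn X0 x y" using markov_fib_conn[OF mk0] h unfolding fib_conn_def by blast
    have "x - y \<in> kerA A" using h by blast
    have "conn (\<Inter>\<C>) x y \<and> y \<in> fiber A x"
    proof (rule conn_transfer[OF c0])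
      show "X0 \<subseteq> kerA A" using mk0 unfolding markov_basis_def by blast
      show "natvec x" using h by blast
      fix p q assume "p \<in> fiber A x" "q \<in> fiber A x" "p - q \<in> X0"
      then have "p - q \<in> X0 \<inter> R" unfolding R_def by blast
      then show "p - q \<in> \<Inter>\<C>" using X0R by blast
    qed
    then show "conn (\<Inter>\<C>) x y" by blast
  qed
  then show ?thesis using markov_iff sub by blast
qed

lemma exists_minimal:
  assumes pointed: "kerA A \<inter> {u. natvec u} = {0}" and mB: "markov_basis A B"
  shows "\<exists>B'\<subseteq>B. minimal_markov_basis A B'"
proof -
  define \<A> where "\<A> = {X. - X \<subseteq> B \<and> markov_basis A (- X)}"
  have "\<exists>M\<in>\<A>. \<forall>X\<in>\<A>. M \<subseteq> X \<longrightarrow> X = M"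
  proof (rule subset_Zorn)
    fix C assume C: "subset.chain \<A> C"
    show "\<exists>U\<in>\<A>. \<forall>X\<in>C. X \<subseteq> U"
    proof (cases "C = {}")
      case True
      then show ?thesis using mB unfolding \<A>_def by (intro bexI[of _ "- B"]) auto
    next
      case False
      have ch: "C \<subseteq> \<A>" "\<forall>X\<in>C. \<forall>Y\<in>C. X \<subseteq> Y \<or> Y \<subseteq> X" using C unfolding subset_chain_def by auto
      have eq: "- \<Union>C = \<Inter>(uminus ` C)" by auto
      have "markov_basis A (\<Inter>(uminus ` C))"
      proof (rule chain_inter_markov[OF pointed])
        show "uminus ` C \<noteq> {}" using False by simp
        show "markov_basis A X" if XC: "X \<in> uminus ` C" for X
        proof -
          obtain X' where X': "X = - X'" "X' \<in> C" using XC by auto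
          then have "X' \<in> \<A>" using ch(1) by blast
          then show ?thesis unfolding \<A>_def X'(1) by simp
        qed
        show "X \<subseteq> Y \<or> Y \<subseteq> X" if XC: "X \<in> uminus ` C" and YC: "Y \<in> uminus ` C" for X Y
        proof -
          obtain X' where X': "X = - X'" "X' \<in> C" using XC by auto
          obtain Y' where Y': "Y = - Y'" "Y' \<in> C" using YC by auto
          have "X' \<subseteq> Y' \<or> Y' \<subseteq> X'" using ch(2) X'(2) Y'(2) by simp
          then show ?thesis unfolding X'(1) Y'(1) by (metis Compl_subset_Compl_iff)
        qed
      qed
      moreover have "- \<Union>C \<subseteq> B"
      proof -
        obtain X where X: "X \<in> C" using False by blast
        then have "X \<in> \<A>" using ch(1) by blast
        then have "- X \<subseteq> B" unfolding \<A>_def by simp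
        moreover have "- \<Union>C \<subseteq> - X" using X by blast
        ultimately show ?thesis by (rule subset_trans[rotated])
      qed
      ultimately have "\<Union>C \<in> \<A>" unfolding \<A>_def using eq by simp
      then show ?thesis by blast
    qed
  qed
  then obtain M where M: "M \<in> \<A>" "\<forall>X\<in>\<A>. M \<subseteq> X \<longrightarrow> X = M" by blast
  have "minimal_markov_basis A (- M)"
    unfolding minimal_markov_basis_def
  proof (intro conjI allI impI)
    show "markov_basis A (- M)" using M(1) unfolding \<A>_def by simp
    fix B' assume "B' \<subset> - M"
    show "\<not> markov_basis A B'"
    proof
      assume "markov_basis A B'"
      moreover have "B' \<subseteq> B"
      proof -
        have "- M \<subseteq> B" using M(1) unfolding \<A>_def by simp
        then show ?thesis using \<open>B' \<subset> - M\<close> by blast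
      qed
      ultimately have "- B' \<in> \<A>" unfolding \<A>_def by simp
      moreover have "M \<subseteq> - B'" using \<open>B' \<subset> - M\<close> by blast
      ultimately have "- B' = M" using M(2) by blast
      then show False using \<open>B' \<subset> - M\<close> by auto
    qed
  qed
  moreover have "- M \<subseteq> B" using M(1) unfolding \<A>_def by simp
  ultimately show ?thesis by blast
qed



lemma conn_lift: assumes "\<And>p q. step B p q \<Longrightarrow> conn B' p q" "conn B x y" shows "conn B' x y"
  using assms(2)
proof (induction rule: rtranclp_induct)
  case base then show ?case by simp
next
  case (step y z) then show ?case using assms(1) by (meson rtranclp_trans)
qed

lemma markov_sub:
  assumes "markov_basis A B" "B' \<subseteq> kerA A" "\<And>u. u \<in> B \<Longrightarrow> u \<noteq> 0 \<Longrightarrow> u \<in> B' \<or> - u \<in> B'"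
  shows "markov_basis A B'"
proof -
  have "conn B' p q" if "step B p q" for p q
  proof (cases "p = q")
    case True then show ?thesis by simp
  next
    case False
    have s: "natvec p" "natvec q" "p - q \<in> B \<or> q - p \<in> B" using that unfolding step_def by auto
    have "p - q \<noteq> 0" "q - p \<noteq> 0" using False by auto
    then have "p - q \<in> B' \<or> q - p \<in> B'" using s(3) assms(3) by fastforce
    then have "step B' p q" using s unfolding step_def by blast
    then show ?thesis by blast
  qed
  then have "fib_conn A B'" using markov_fib_conn[OF assms(1)] conn_lift unfolding fib_conn_def by metis
  then show ?thesis using markov_iff assms(2) by blast
qed

lemma neg_ne: "u \<noteq> (0::'n \<Rightarrow> int) \<Longrightarrow> - u \<noteq> u"
  by (auto simp: fun_eq_iff)

lemma uminus_fun: "(- u) = (\<lambda>i. - u i)" by (simp add: fun_eq_iff)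

context
  fixes A :: "'d::finite \<Rightarrow> 'n::finite \<Rightarrow> int" and M :: "('n \<Rightarrow> int) set"
  assumes pointed: "kerA A \<inter> {u. natvec u} = {0}"
    and minM: "minimal_markov_basis A M"
begin

lemma mM: "markov_basis A M" using minM unfolding minimal_markov_basis_def by blast
lemma Mker: "M \<subseteq> kerA A" using mM unfolding markov_basis_def by blast

lemma zero_notin: "0 \<notin> M"
proof
  assume "0 \<in> M"
  have "markov_basis A (M - {0})" by (rule markov_sub[OF mM]) (use Mker in auto)
  moreover have "M - {0} \<subset> M" using \<open>0 \<in> M\<close> by blast
  ultimately show False using minM unfolding minimal_markov_basis_def by blast
qed

lemma neg_notin: "u \<in> M \<Longrightarrow> - u \<notin> M"
proof
  assume u: "u \<in> M" "- u \<in> M"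
  have u0: "u \<noteq> 0" using u zero_notin by blast
  then have "- u \<noteq> u" by (rule neg_ne)
  have "markov_basis A (M - {u})"
  proof (rule markov_sub[OF mM])
    show "M - {u} \<subseteq> kerA A" using Mker by blast
    fix w assume "w \<in> M" "w \<noteq> 0"
    then show "w \<in> M - {u} \<or> - w \<in> M - {u}" using u \<open>- u \<noteq> u\<close> by auto
  qed
  moreover have "M - {u} \<subset> M" using u by blast
  ultimately show False using minM unfolding minimal_markov_basis_def by blast
qed

lemma flip_minimal: assumes u: "u \<in> M" shows "minimal_markov_basis A (insert (- u) (M - {u}))"
proof -
  let ?Mu = "insert (- u) (M - {u})"
  have u0: "u \<noteq> 0" using u zero_notin by blast
  have nu: "- u \<noteq> u" using u0 by (rule neg_ne)
  have nuM: "- u \<notin> M" using neg_notin[OF u] .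
  have Muk: "?Mu \<subseteq> kerA A" using Mker u kerA_uminus by blast
  have mk: "markov_basis A ?Mu"
    by (rule markov_sub[OF mM Muk]) (auto)
  have "\<not> markov_basis A B'" if B': "B' \<subset> ?Mu" for B'
  proof
    assume mB': "markov_basis A B'"
    define B'' where "B'' = (B' - {- u}) \<union> (if - u \<in> B' then {u} else {})"
    have "markov_basis A B''"
    proof (rule markov_sub[OF mB'])
      show "B'' \<subseteq> kerA A" unfolding B''_def using B' Muk Mker u by auto
      fix w assume "w \<in> B'" "w \<noteq> 0"
      then show "w \<in> B'' \<or> - w \<in> B''" unfolding B''_def by (cases "w = - u") auto
    qed
    moreover have "B'' \<subset> M"
    proof -
      have sub: "B'' \<subseteq> M" unfolding B''_def using B' u by auto
      obtain e where e: "e \<in> ?Mu" "e \<notin> B'" using B' by blast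
      show ?thesis
      proof (cases "e = - u")
        case True
        then have "u \<notin> B''" unfolding B''_def using e nu B' by auto
        then show ?thesis using sub u by blast
      next
        case False
        then have "e \<in> M" "e \<noteq> u" "e \<notin> B''" using e unfolding B''_def by auto
        then show ?thesis using sub by blast
      qed
    qed
    ultimately show False using minM unfolding minimal_markov_basis_def by blast
  qed
  then show ?thesis using mk unfolding minimal_markov_basis_def by blast
qed

lemma fiber_sym: "z \<in> kerA A \<Longrightarrow> fiber A (negp z) = fiber A (posp z)"
  unfolding fiber_def
proof (intro Collect_cong conj_cong refl)
  fix m assume z: "z \<in> kerA A"
  have e: "m - negp z = (m - posp z) + z" using posp_negp[of z] by (simp add: algebra_simps)
  have e2: "m - posp z = (m - negp z) - z" using posp_negp[of z] by (simp add: algebra_simps)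
  show "(m - negp z \<in> kerA A) = (m - posp z \<in> kerA A)"
    using e e2 kerA_add[OF _ z] kerA_diff[OF _ z] by metis
qed

lemma natvec_ker_zero: "v \<in> kerA A \<Longrightarrow> natvec v \<Longrightarrow> v = 0"
  using pointed by blast

lemma KEY:
  assumes unique: "\<forall>M'. minimal_markov_basis A M' \<longrightarrow>
        (\<exists>\<sigma>. (\<forall>u\<in>M. \<sigma> u = 1 \<or> \<sigma> u = -1) \<and> M' = (\<lambda>u. (\<lambda>i. \<sigma> u * u i)) ` M)"
    and z: "z \<in> M" and m: "m \<in> fiber A (posp z)"
  shows "m = posp z \<or> m = negp z"
proof (rule ccontr)
  assume nm: "\<not> (m = posp z \<or> m = negp z)"
  have zk: "z \<in> kerA A" using z Mker by blast
  have mv: "natvec m" and mk: "m - posp z \<in> kerA A" using m unfolding fiber_def by auto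
  define a where "a = posp z - m"
  define b where "b = m - negp z"
  have ak: "a \<in> kerA A" unfolding a_def using kerA_uminus[OF mk] by simp
  have "b = (m - posp z) + (posp z - negp z)" unfolding b_def by (simp add: algebra_simps)
  then have "b = (m - posp z) + z" by (simp add: posp_negp)
  then have bk: "b \<in> kerA A" using kerA_add[OF mk zk] by simp
  define M' where "M' = insert a (insert b (M - {z}))"
  have M'k: "M' \<subseteq> kerA A" unfolding M'_def using ak bk Mker by blast
  have stepM': "conn M' p q" if "step M p q" for p q
  proof -
    have s: "natvec p" "natvec q" "p - q \<in> M \<or> q - p \<in> M" using that unfolding step_def by auto
    have key: "conn M' p q" if pq: "natvec p" "natvec q" "p - q = z" for p q
    proof -
      define g where "g = p - posp z"
      have zi: "z i = p i - q i" for i using pq(3) by (auto simp: fun_eq_iff)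
      have gv: "natvec g" using pq(1,2) unfolding g_def natvec_def posp_def by (auto simp: zi)
      have qe: "q = g + negp z" unfolding g_def using pq(3) posp_negp[of z] by (simp add: algebra_simps)
      have pe: "p = g + posp z" unfolding g_def by simp
      define r where "r = g + m"
      have rv: "natvec r" unfolding r_def using gv mv by (simp add: natvec_def)
      have "p - r = a" unfolding pe r_def a_def by simp
      then have s1: "step M' p r" using pq rv unfolding step_def M'_def by simp
      have "r - q = b" unfolding qe r_def b_def by simp
      then have s2: "step M' r q" using pq rv unfolding step_def M'_def by simp
      show ?thesis using s1 s2 by (meson r_into_rtranclp rtranclp_trans)
    qed
    show ?thesis
    proof (cases "p - q = z \<or> q - p = z")
      case True
      then show ?thesis using key[OF s(1,2)] key[OF s(2,1)] conn_sym by blast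
    next
      case False
      then have "p - q \<in> M' \<or> q - p \<in> M'" using s(3) unfolding M'_def by blast
      then show ?thesis using s(1,2) unfolding step_def by blast
    qed
  qed
  have "fib_conn A M'" using markov_fib_conn[OF mM] conn_lift[OF stepM'] unfolding fib_conn_def by metis
  then have "markov_basis A M'" using markov_iff M'k by blast
  then obtain M'' where M'': "M'' \<subseteq> M'" "minimal_markov_basis A M''"
    using exists_minimal[OF pointed] by blast
  then obtain \<sigma> where \<sigma>: "\<forall>u\<in>M. \<sigma> u = 1 \<or> \<sigma> u = -1" "M'' = (\<lambda>u. (\<lambda>i. \<sigma> u * u i)) ` M"
    using unique by blast
  have "(\<lambda>i. \<sigma> z * z i) \<in> M'" using \<sigma>(2) M''(1) z by blast
  moreover have "(\<lambda>i. \<sigma> z * z i) = z \<or> (\<lambda>i. \<sigma> z * z i) = - z" using \<sigma>(1) z by (auto simp: fun_eq_iff)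
  ultimately have zz: "z \<in> M' \<or> - z \<in> M'" by metis
  have z0: "z \<noteq> 0" using z zero_notin by blast
  have za: "z \<noteq> a"
  proof
    assume "z = a"
    then have "m = negp z" unfolding a_def using posp_negp[of z] by (simp add: algebra_simps)
    then show False using nm by blast
  qed
  have zb: "z \<noteq> b"
  proof
    assume "z = b"
    then have "m = posp z" unfolding b_def using posp_negp[of z] by (simp add: algebra_simps)
    then show False using nm by blast
  qed
  have nza: "- z \<noteq> a"
  proof
    assume "- z = a"
    then have me: "m = posp z + z" unfolding a_def by (simp add: algebra_simps)
    have "natvec z" unfolding natvec_def
    proof
      fix i
      have "m i = max (z i) 0 + z i" using me by (simp add: posp_def)
      moreover have "m i \<ge> 0" using mv by (simp add: natvec_def)
      ultimately show "z i \<ge> 0" by linarith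
    qed
    then show False using natvec_ker_zero[OF zk] z0 by blast
  qed
  have nzb: "- z \<noteq> b"
  proof
    assume "- z = b"
    then have me: "m = negp z - z" unfolding b_def by (simp add: algebra_simps)
    have "natvec (- z)" unfolding natvec_def
    proof
      fix i
      have "m i = max (- z i) 0 - z i" using me by (simp add: negp_def)
      moreover have "m i \<ge> 0" using mv by (simp add: natvec_def)
      ultimately show "(- z) i \<ge> 0" by simp
    qed
    then show False using natvec_ker_zero[OF kerA_uminus[OF zk]] z0 by simp
  qed
  have nzM: "- z \<notin> M" using neg_notin[OF z] .
  have "z \<in> M' \<longleftrightarrow> z = a \<or> z = b \<or> z \<in> M - {z}" unfolding M'_def by (simp only: insert_iff)
  then have c1: "z \<notin> M'" using za zb by simp
  have "- z \<in> M' \<longleftrightarrow> - z = a \<or> - z = b \<or> - z \<in> M - {z}" unfolding M'_def by (simp only: insert_iff)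
  then have c2: "- z \<notin> M'" using nza nzb nzM by simp
  show False using zz c1 c2 by simp
qed

end



lemma norm1_uminus: "norm1 (- x) = norm1 x"
  unfolding norm1_def by simp

lemma DEC:
  assumes zk: "z \<in> kerA A" and uk: "u \<in> kerA A" and rd: "reduces_distance u z"
  shows "u = z \<or> u = - z \<or> ((\<exists>u' v. u' \<in> kerA A - {0} \<and> v \<in> kerA A - {0} \<and> z = u' + v \<and> (\<forall>i. u' i > 0 \<longrightarrow> v i \<ge> 0))
            \<and> (pos_dist_decomp A z \<or> neg_dist_decomp A z))"
proof -
  obtain p q e where pq: "(p, q) \<in> {(posp z, negp z), (negp z, posp z)}" "e \<in> {1, -1::int}"
    "natvec (\<lambda>i. p i + e * u i)" "norm1 (\<lambda>i. p i + e * u i - q i) < norm1 z"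
    using rd unfolding reduces_distance_def by blast
  define w where "w = (\<lambda>i. e * u i)"
  have wu: "w = u \<or> w = - u" using pq(2) unfolding w_def by (auto simp: fun_eq_iff)
  then have wk: "w \<in> kerA A" using uk kerA_uminus by auto
  have uw: "u = w \<or> u = - w" using wu by auto
  consider "p = posp z" "q = negp z" | "p = negp z" "q = posp z" using pq(1) by blast
  then show ?thesis
  proof cases
    case 1
    have nv: "posp z i + w i \<ge> 0" for i using pq(3) unfolding 1 w_def natvec_def by simp
    have "(\<lambda>i. p i + e * u i - q i) = z + w" unfolding 1 w_def posp_def negp_def by (auto simp: fun_eq_iff)
    then have nr: "norm1 (z + w) < norm1 z" using pq(4) by simp
    show ?thesis
    proof (cases "z + w = 0")
      case True
      then have "w = - z" by (simp add: eq_neg_iff_add_eq_0 add.commute)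
      then show ?thesis using uw by auto
    next
      case False
      have w0: "w \<noteq> 0" using nr by auto
      have sc: "\<forall>i. (- w) i > 0 \<longrightarrow> (z + w) i \<ge> 0"
      proof (intro allI impI)
        fix i assume "(- w) i > 0"
        then show "(z + w) i \<ge> 0" using nv[of i] by (simp add: posp_def split: if_splits)
      qed
      have pd: "posp (- w) \<le> posp z"
        unfolding le_fun_def
      proof
        fix i show "posp (- w) i \<le> posp z i" using nv[of i] unfolding posp_def by (auto simp: max_def)
      qed
      have mem: "- w \<in> kerA A - {0}" "z + w \<in> kerA A - {0}" "z = - w + (z + w)"
        using w0 False kerA_uminus[OF wk] kerA_add[OF zk wk] by auto
      have "pos_dist_decomp A z" unfolding pos_dist_decomp_def using mem pd nr by blast
      moreover have "\<exists>u' v. u' \<in> kerA A - {0} \<and> v \<in> kerA A - {0} \<and> z = u' + v \<and> (\<forall>i. u' i > 0 \<longrightarrow> v i \<ge> 0)"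
        using mem sc by blast
      ultimately show ?thesis by blast
    qed
  next
    case 2
    have nv: "negp z i + w i \<ge> 0" for i using pq(3) unfolding 2 w_def natvec_def by simp
    have "(\<lambda>i. p i + e * u i - q i) = - (z - w)" unfolding 2 w_def posp_def negp_def by (auto simp: fun_eq_iff)
    then have nr: "norm1 (z - w) < norm1 z" using pq(4) norm1_uminus[of "z - w"] by simp
    show ?thesis
    proof (cases "z - w = 0")
      case True
      then have "w = z" by simp
      then show ?thesis using uw by auto
    next
      case False
      have w0: "w \<noteq> 0" using nr by auto
      have sc: "\<forall>i. (z - w) i > 0 \<longrightarrow> w i \<ge> 0"
      proof (intro allI impI)
        fix i assume "(z - w) i > 0"
        then show "w i \<ge> 0" using nv[of i] by (simp add: negp_def split: if_splits)
      qed
      have nd: "negp w \<le> negp z"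
        unfolding le_fun_def
      proof
        fix i show "negp w i \<le> negp z i" using nv[of i] unfolding negp_def by (auto simp: max_def)
      qed
      have mem: "w \<in> kerA A - {0}" "z - w \<in> kerA A - {0}" "z = w + (z - w)" "z = (z - w) + w"
        using w0 False wk kerA_diff[OF zk wk] by auto
      have "neg_dist_decomp A z" unfolding neg_dist_decomp_def using mem nd nr by blast
      moreover have "\<exists>u' v. u' \<in> kerA A - {0} \<and> v \<in> kerA A - {0} \<and> z = u' + v \<and> (\<forall>i. u' i > 0 \<longrightarrow> v i \<ge> 0)"
        using mem sc by blast
      ultimately show ?thesis by blast
    qed
  qed
qed

lemma rd_neg1: "reduces_distance u z \<Longrightarrow> reduces_distance (- u) z"
proof -
  assume "reduces_distance u z"
  then obtain p q e where pq: "(p, q) \<in> {(posp z, negp z), (negp z, posp z)}" "e \<in> {1, -1::int}"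
    "natvec (\<lambda>i. p i + e * u i)" "norm1 (\<lambda>i. p i + e * u i - q i) < norm1 z"
    unfolding reduces_distance_def by blast
  have e1: "(\<lambda>i. p i + (- e) * (- u) i) = (\<lambda>i. p i + e * u i)" by simp
  have e2: "(\<lambda>i. p i + (- e) * (- u) i - q i) = (\<lambda>i. p i + e * u i - q i)" by simp
  have e3: "- e \<in> {1, -1::int}" using pq(2) by auto
  show "reduces_distance (- u) z" unfolding reduces_distance_def
    apply (rule exI[of _ p], rule exI[of _ q], rule exI[of _ "- e"])
    unfolding e1 e2 using pq(1,3,4) e3 by blast
qed

lemma rd_neg: "reduces_distance (- u) z \<longleftrightarrow> reduces_distance u z"
  using rd_neg1[of u z] rd_neg1[of "- u" z] by auto

lemma dr_contains:
  assumes "distance_reducing A B" "z \<in> DA A" shows "z \<in> B \<or> - z \<in> B"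
proof -
  have z: "z \<in> kerA A" "z \<noteq> 0" "\<not> pos_dist_decomp A z" "\<not> neg_dist_decomp A z" using assms(2) unfolding DA_def by auto
  obtain u where u: "u \<in> B" "reduces_distance u z" using assms(1) z unfolding distance_reducing_def by blast
  have "u \<in> kerA A" using assms(1) u unfolding distance_reducing_def by blast
  from DEC[OF z(1) this u(2)] z(3,4) have "u = z \<or> u = - z" by blast
  then show ?thesis using u(1) by auto
qed

lemma posp_uminus: "posp (- z) = negp z" by (simp add: posp_def negp_def fun_eq_iff)
lemma negp_uminus: "negp (- z) = posp z" by (simp add: posp_def negp_def fun_eq_iff)

context
  fixes A :: "'d::finite \<Rightarrow> 'n::finite \<Rightarrow> int" and M :: "('n \<Rightarrow> int) set"
  assumes pointed: "kerA A \<inter> {u. natvec u} = {0}"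
    and minM: "minimal_markov_basis A M"
    and unique: "\<forall>M'. minimal_markov_basis A M' \<longrightarrow>
        (\<exists>\<sigma>. (\<forall>u\<in>M. \<sigma> u = 1 \<or> \<sigma> u = -1) \<and> M' = (\<lambda>u. (\<lambda>i. \<sigma> u * u i)) ` M)"
    and dr: "distance_reducing A M"
begin

lemma P_ker: assumes "z \<in> M \<union> uminus ` M" shows "z \<in> kerA A \<and> z \<noteq> 0"
proof (cases "z \<in> M")
  case True then show ?thesis using Mker[OF pointed minM] zero_notin[OF pointed minM] by blast
next
  case False
  then obtain u where u: "u \<in> M" "z = - u" using assms by blast
  have "u \<in> kerA A" "u \<noteq> 0" using u(1) Mker[OF pointed minM] zero_notin[OF pointed minM] by blast+
  then show ?thesis using kerA_uminus u(2) by simp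
qed

lemma KEYP: assumes z: "z \<in> M \<union> uminus ` M" and m: "m \<in> fiber A (posp z)"
  shows "m = posp z \<or> m = negp z"
proof (cases "z \<in> M")
  case True then show ?thesis using KEY[OF pointed minM unique True m] by blast
next
  case False
  then obtain u where u: "u \<in> M" "z = - u" using z by blast
  have uk: "u \<in> kerA A" using u Mker[OF pointed minM] by blast
  have "m \<in> fiber A (posp u)" using m fiber_sym[OF pointed minM uk] unfolding u(2) posp_uminus by simp
  then show ?thesis using KEY[OF pointed minM unique u(1)] unfolding u(2) posp_uminus negp_uminus by blast
qed

lemma P_SA: assumes z: "z \<in> M \<union> uminus ` M" shows "z \<in> SA A"
proof -
  have zk: "z \<in> kerA A" "z \<noteq> 0" using P_ker[OF z] by auto
  have "False" if uv: "u \<in> kerA A - {0}" "v \<in> kerA A - {0}" "z = u + v" "\<forall>i. u i > 0 \<longrightarrow> v i \<ge> 0" for u v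
  proof -
    define m where "m = posp z - u"
    have "natvec m" unfolding natvec_def m_def
    proof
      fix i
      show "(posp z - u) i \<ge> 0"
      proof (cases "u i > 0")
        case True
        then have "v i \<ge> 0" using uv(4) by blast
        moreover have "z i = u i + v i" using uv(3) by simp
        ultimately show ?thesis by (simp add: posp_def)
      next
        case False then show ?thesis by (simp add: posp_def)
      qed
    qed
    moreover have "m - posp z \<in> kerA A" unfolding m_def using kerA_uminus[of u A] uv(1) by simp
    ultimately have "m = posp z \<or> m = negp z" using KEYP[OF z] unfolding fiber_def by blast
    then show False
    proof
      assume "m = posp z" then have "u = 0" unfolding m_def by simp
      then show False using uv(1) by blast
    next
      assume "m = negp z" then have "u = z" unfolding m_def using posp_negp[of z] by (simp add: algebra_simps)
      then have "v = 0" using uv(3) by simp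
      then show False using uv(2) by blast
    qed
  qed
  then show ?thesis unfolding SA_def using zk by blast
qed

lemma P_DA: assumes z: "z \<in> M \<union> uminus ` M" shows "z \<in> DA A"
proof -
  have zk: "z \<in> kerA A" "z \<noteq> 0" using P_ker[OF z] by auto
  have "\<not> pos_dist_decomp A z"
  proof
    assume "pos_dist_decomp A z"
    then obtain u v where uv: "u \<in> kerA A - {0}" "v \<in> kerA A - {0}" "z = u + v" "posp u \<le> posp z"
      unfolding pos_dist_decomp_def by blast
    define m where "m = posp z - u"
    have "natvec m" unfolding natvec_def m_def
    proof
      fix i
      have "posp u i \<le> posp z i" using uv(4) by (simp add: le_fun_def)
      then show "(posp z - u) i \<ge> 0" by (simp add: posp_def)
    qed
    moreover have "m - posp z \<in> kerA A" unfolding m_def using kerA_uminus[of u A] uv(1) by simp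
    ultimately have "m = posp z \<or> m = negp z" using KEYP[OF z] unfolding fiber_def by blast
    then show False
    proof
      assume "m = posp z" then have "u = 0" unfolding m_def by simp
      then show False using uv(1) by blast
    next
      assume "m = negp z" then have "u = z" unfolding m_def using posp_negp[of z] by (simp add: algebra_simps)
      then have "v = 0" using uv(3) by simp
      then show False using uv(2) by blast
    qed
  qed
  moreover have "\<not> neg_dist_decomp A z"
  proof
    assume "neg_dist_decomp A z"
    then obtain u v where uv: "u \<in> kerA A - {0}" "v \<in> kerA A - {0}" "z = u + v" "negp u \<le> negp z"
      unfolding neg_dist_decomp_def by blast
    define m where "m = negp z + u"
    have "natvec m" unfolding natvec_def m_def
    proof
      fix i
      have "negp u i \<le> negp z i" using uv(4) by (simp add: le_fun_def)
      then show "(negp z + u) i \<ge> 0" by (simp add: negp_def)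
    qed
    moreover have "m - posp z = u - z" unfolding m_def using posp_negp[of z] by (simp add: algebra_simps)
    then have "m - posp z \<in> kerA A" using kerA_diff[of u A z] uv(1) zk by simp
    ultimately have "m = posp z \<or> m = negp z" using KEYP[OF z] unfolding fiber_def by blast
    then show False
    proof
      assume "m = posp z" then have "u = z" unfolding m_def using posp_negp[of z] by (simp add: algebra_simps)
      then have "v = 0" using uv(3) by simp
      then show False using uv(2) by blast
    next
      assume "m = negp z" then have "u = 0" unfolding m_def by simp
      then show False using uv(1) by blast
    qed
  qed
  ultimately show ?thesis unfolding DA_def using zk by blast
qed

lemma SA_P: assumes z: "z \<in> SA A" shows "z \<in> M \<union> uminus ` M"
proof -
  have zk: "z \<in> kerA A" "z \<noteq> 0" using z unfolding SA_def by auto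
  obtain b where b: "b \<in> M" "reduces_distance b z" using dr zk unfolding distance_reducing_def by blast
  have "b \<in> kerA A" using b Mker[OF pointed minM] by blast
  from DEC[OF zk(1) this b(2)] z have "b = z \<or> b = - z" unfolding SA_def by blast
  then show ?thesis
  proof
    assume "b = z" then show ?thesis using b(1) by simp
  next
    assume "b = - z" then have "z = - b" by simp
    then show ?thesis using b(1) by blast
  qed
qed

lemma DA_P: assumes z: "z \<in> DA A" shows "z \<in> M \<union> uminus ` M"
proof -
  have "z \<in> M \<or> - z \<in> M" using dr_contains[OF dr z] .
  then show ?thesis
  proof
    assume "z \<in> M" then show ?thesis by simp
  next
    assume "- z \<in> M"
    moreover have "z = - (- z)" by simp
    ultimately show ?thesis by blast
  qed
qed

lemma DA_eq: "DA A = M \<union> uminus ` M" using DA_P P_DA by blast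
lemma SA_eq: "SA A = M \<union> uminus ` M" using SA_P P_SA by blast

lemma MA_eq: "MA A = M \<union> uminus ` M"
proof
  show "MA A \<subseteq> M \<union> uminus ` M"
  proof
    fix x assume "x \<in> MA A"
    then obtain B where B: "minimal_markov_basis A B" "x \<in> B" unfolding MA_def by blast
    then obtain \<sigma> where \<sigma>: "\<forall>u\<in>M. \<sigma> u = 1 \<or> \<sigma> u = -1" "B = (\<lambda>u. (\<lambda>i. \<sigma> u * u i)) ` M"
      using unique by blast
    then obtain u where u: "u \<in> M" "x = (\<lambda>i. \<sigma> u * u i)" using B(2) by blast
    have "x = u \<or> x = - u" using \<sigma>(1) u by (auto simp: fun_eq_iff)
    then show "x \<in> M \<union> uminus ` M" using u(1) by blast
  qed
  show "M \<union> uminus ` M \<subseteq> MA A"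
  proof
    fix x assume "x \<in> M \<union> uminus ` M"
    then show "x \<in> MA A"
    proof
      assume "x \<in> M" then show ?thesis unfolding MA_def using minM by blast
    next
      assume "x \<in> uminus ` M"
      then obtain u where u: "u \<in> M" "x = - u" by blast
      show ?thesis unfolding MA_def using flip_minimal[OF pointed minM u(1)] u(2) by blast
    qed
  qed
qed

lemma min_dr:
  assumes X: "X \<subseteq> M \<union> uminus ` M" "\<And>x. x \<in> X \<Longrightarrow> - x \<notin> X" "distance_reducing A X"
  shows "minimal_distance_reducing A X"
  unfolding minimal_distance_reducing_def
proof (intro conjI allI impI)
  show "distance_reducing A X" by (rule X(3))
  fix B' assume B': "B' \<subset> X"
  show "\<not> distance_reducing A B'"
  proof
    assume d: "distance_reducing A B'"
    obtain w where w: "w \<in> X" "w \<notin> B'" using B' by blast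
    have "w \<in> DA A" using P_DA X(1) w(1) by blast
    from dr_contains[OF d this] w B' X(2)[OF w(1)] show False by blast
  qed
qed

lemma calDA_eq: "calDA A = M \<union> uminus ` M"
proof
  show "calDA A \<subseteq> M \<union> uminus ` M"
  proof
    fix x assume "x \<in> calDA A"
    then obtain B where B: "minimal_distance_reducing A B" "x \<in> B" unfolding calDA_def by blast
    have dB: "distance_reducing A B" using B(1) unfolding minimal_distance_reducing_def by blast
    let ?B' = "B \<inter> (M \<union> uminus ` M)"
    have "distance_reducing A ?B'"
      unfolding distance_reducing_def
    proof (intro conjI ballI impI)
      show "?B' \<subseteq> kerA A" using dB unfolding distance_reducing_def by blast
      fix w assume w: "w \<in> kerA A" "w \<noteq> 0"
      obtain b where b: "b \<in> M" "reduces_distance b w" using dr w unfolding distance_reducing_def by blast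
      have "b \<in> DA A" using P_DA b(1) by blast
      then have "b \<in> B \<or> - b \<in> B" using dr_contains[OF dB] by blast
      then show "\<exists>u\<in>?B'. reduces_distance u w"
      proof
        assume "b \<in> B" then show ?thesis using b by blast
      next
        assume "- b \<in> B"
        moreover have "reduces_distance (- b) w" using b(2) rd_neg by blast
        ultimately show ?thesis using b(1) by blast
      qed
    qed
    then have "\<not> ?B' \<subset> B" using B(1) unfolding minimal_distance_reducing_def by blast
    then have "B \<subseteq> M \<union> uminus ` M" by blast
    then show "x \<in> M \<union> uminus ` M" using B(2) by blast
  qed
  show "M \<union> uminus ` M \<subseteq> calDA A"
  proof
    fix x assume "x \<in> M \<union> uminus ` M"
    then show "x \<in> calDA A"
    proof
      assume x: "x \<in> M"
      have "minimal_distance_reducing A M"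
        using min_dr[of M] dr neg_notin[OF pointed minM] by blast
      then show ?thesis unfolding calDA_def using x by blast
    next
      assume "x \<in> uminus ` M"
      then obtain u where u: "u \<in> M" "x = - u" by blast
      let ?Mu = "insert (- u) (M - {u})"
      have u0: "u \<noteq> 0" using u zero_notin[OF pointed minM] by blast
      have nu: "- u \<noteq> u" using neg_ne[OF u0] .
      have sub: "?Mu \<subseteq> M \<union> uminus ` M" using u by blast
      have disj: "- y \<notin> ?Mu" if yMu: "y \<in> ?Mu" for y
      proof
        assume ny: "- y \<in> ?Mu"
        consider "y = - u" | "y \<in> M" "y \<noteq> u" using yMu by blast
        then show False
        proof cases
          case 1 then show False using ny nu by auto
        next
          case 2
          then have "- y \<noteq> - u" by simp
          then have "- y \<in> M" using ny by blast
          then show False using neg_notin[OF pointed minM 2(1)] by blast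
        qed
      qed
      have "distance_reducing A ?Mu"
        unfolding distance_reducing_def
      proof (intro conjI ballI impI)
        show "?Mu \<subseteq> kerA A" using Mker[OF pointed minM] u kerA_uminus by blast
        fix w assume w: "w \<in> kerA A" "w \<noteq> 0"
        obtain b where b: "b \<in> M" "reduces_distance b w" using dr w unfolding distance_reducing_def by blast
        show "\<exists>v\<in>?Mu. reduces_distance v w"
        proof (cases "b = u")
          case True then show ?thesis using b(2) rd_neg by blast
        next
          case False then show ?thesis using b by blast
        qed
      qed
      then have "minimal_distance_reducing A ?Mu" using min_dr sub disj by blast
      then show ?thesis unfolding calDA_def using u(2) by blast
    qed
  qed
qed

end

theorem proposition8p13:
  fixes A :: "'d::finite \<Rightarrow> 'n::finite \<Rightarrow> int"
    and M :: "('n \<Rightarrow> int) set"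
  assumes pointed: "kerA A \<inter> {u. natvec u} = {0}"
    and minM: "minimal_markov_basis A M"
    and unique: "\<forall>M'. minimal_markov_basis A M' \<longrightarrow>
        (\<exists>\<sigma>. (\<forall>u\<in>M. \<sigma> u = 1 \<or> \<sigma> u = -1) \<and> M' = (\<lambda>u. (\<lambda>i. \<sigma> u * u i)) ` M)"
    and dr: "distance_reducing A M"
  shows "SA A = DA A \<and> DA A = MA A \<and> MA A = calDA A"
  using SA_eq[OF assms] DA_eq[OF assms] MA_eq[OF assms] calDA_eq[OF assms] by simp


end
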